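(* Let $X \subseteq \mathbb{R}^n$ be nonempty, let $g : X \to \mathbb{R}$ be a function that is bounded on $X$ and attains its minimum over $X$ at some $x^\star \in X$. Let $\epsilon \ge 0$, $\delta \ge 0$, and let $x^\star_\epsilon \in X$ be $\epsilon$-optimal for $g$, i.e. $g(x^\star_\epsilon) \le g(x^\star) + \epsilon$. For $\hat c \in \mathbb{R}^n$ define $$\ell^\epsilon_{\mathrm{GEN}}(\hat c) = \sup_{x \in X}\big\{ g(x) - g(x^\star_\epsilon) - \hat c^T (x - x^\star_\epsilon)\big\}.$$ Suppose $\hat c$ satisfies $\ell^\epsilon_{\mathrm{GEN}}(\hat c) \le \delta$. Then every $x \in X$ that minimizes $x \mapsto \hat c^T x$ over $X$ satisfies $g(x) \le g(x^\star) + \epsilon + \delta$.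
   Context: $\ell^\epsilon_{\mathrm{GEN}}$ is a surrogate loss for a predicted linear cost $\hat c$ in which the exact minimizer $x^\star$ of $g$ has been replaced by an approximate minimizer $x^\star_\epsilon$. *)

theory Defs
  imports "HOL-Analysis.Analysis"
begin

definition ell_GEN :: "(real ^ 'n) set \<Rightarrow> (real ^ 'n \<Rightarrow> real) \<Rightarrow> real ^ 'n \<Rightarrow> real ^ 'n \<Rightarrow> ereal" where
  "ell_GEN X g xeps c = (SUP x\<in>X. ereal (g x - g xeps - c \<bullet> (x - xeps)))"

end

theory Submission
  imports Defs
begin

theorem theorem2:
  fixes X :: "(real ^ 'n) set" and g :: "real ^ 'n \<Rightarrow> real"
    and xstar xeps c :: "real ^ 'n" and \<epsilon> \<delta> :: real
  assumes "X \<noteq> {}"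
    and "bounded (g ` X)"
    and "xstar \<in> X" and "\<forall>x\<in>X. g xstar \<le> g x"
    and "\<epsilon> \<ge> 0" and "\<delta> \<ge> 0"
    and "xeps \<in> X" and "g xeps \<le> g xstar + \<epsilon>"
    and "ell_GEN X g xeps c \<le> ereal \<delta>"
  shows "\<forall>x\<in>X. (\<forall>y\<in>X. c \<bullet> x \<le> c \<bullet> y) \<longrightarrow> g x \<le> g xstar + \<epsilon> + \<delta>"
proof (intro ballI impI)
  fix x assume x: "x \<in> X" and m: "\<forall>y\<in>X. c \<bullet> x \<le> c \<bullet> y"
  have "ereal (g x - g xeps - c \<bullet> (x - xeps)) \<le> ell_GEN X g xeps c"
    unfolding ell_GEN_def using x by (rule SUP_upper)
  also have "\<dots> \<le> ereal \<delta>" by fact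
  finally have 1: "g x - g xeps - c \<bullet> (x - xeps) \<le> \<delta>" by simp
  have "c \<bullet> x \<le> c \<bullet> xeps" using m assms(7) by blast
  hence "c \<bullet> (x - xeps) \<le> 0" by (simp add: inner_diff_right)
  with 1 assms(8) show "g x \<le> g xstar + \<epsilon> + \<delta>" by linarith
qed

end
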